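(* For $0<p<1$ let $\Delta_p\subset\mathbf R^2$ be the quadrilateral with vertices $(0,0),(p,0),(p,1-p),(0,1)$, let $U_p=\{(a,b,c): a\mu_1+b\mu_2+c>0 \text{ on }\Delta_p\}$, and let $$E_p(a,b,c)=8\pi^2\,\frac{\left(\int_{\partial\Delta_p}(a\mu_1+b\mu_2+c)^{-2}\,d\sigma\right)^2}{\int_{\Delta_p}(a\mu_1+b\mu_2+c)^{-4}\,d\mu}$$ on $U_p/\mathbf R_+$. Then: (i) for every $0<p<1$, $\left[\left(1,0,\frac{p(1-\sqrt{1-p})}{2\sqrt{1-p}+p-2}\right)\right]$ is a critical point of $E_p$; (ii) for $\frac89<p<1$, the two points $\left[\left(-1,0,\frac{p(3p\pm\sqrt{9p^2-8p})}{2(p\pm\sqrt{9p^2-8p})}\right)\right]$ are also critical points of $E_p$; (iii) letting $0<\alpha<\beta<1$ be the real roots of $F(p)=p^4-4p^3+16p^2-16p+4$, for $0<p<\alpha$ the two points $\left[\left(p^2-4p+2\pm\sqrt{F(p)},\,\pm2\sqrt{F(p)},\,p^2+2p-2\mp\sqrt{F(p)}\right)\right]$ are also critical points of $E_p$.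
   Context: $d\mu$ is Lebesgue measure on $\Delta_p$ and $d\sigma$ is the standard boundary measure for a Delzant polytope (on each facet, $d\mu = d\sigma\wedge d\ell$ where $\ell$ is the affine function defining the facet with primitive integral inward normal). $E_p$ is invariant under positive scaling of $(a,b,c)$ and is the square of the normalized Einstein–Hilbert functional of the conformal metric $f^{-2}g$ on the toric one-point blow-up of $\mathbf{CP}^2$ with moment polytope $\Delta_p$ and $f=a\mu_1+b\mu_2+c$. *)

theory Defs
  imports "HOL-Analysis.Analysis"
begin

definition Delta :: "real \<Rightarrow> (real \<times> real) set" where
  "Delta p = {(x, y). 0 \<le> x \<and> x \<le> p \<and> 0 \<le> y \<and> x + y \<le> 1}"

definition affn :: "real \<times> real \<times> real \<Rightarrow> real \<Rightarrow> real \<Rightarrow> real" where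
  "affn v x y = fst v * x + fst (snd v) * y + snd (snd v)"

definition U :: "real \<Rightarrow> (real \<times> real \<times> real) set" where
  "U p = {v. \<forall>(x, y) \<in> Delta p. affn v x y > 0}"

text \<open>Standard boundary measure of the Delzant polytope Delta p, written out facet by facet:
  on each facet d mu = d sigma wedge d l, with l the defining affine function with primitive
  inward normal.  Facets: mu2 = 0 (l = mu2, d sigma = d mu1 on [0,p]);
  mu1 = p (l = p - mu1, d sigma = d mu2 on [0,1-p]);
  mu1 + mu2 = 1 (l = 1 - mu1 - mu2, d sigma = d mu1 on [0,p]);
  mu1 = 0 (l = mu1, d sigma = d mu2 on [0,1]).\<close>
definition bdry_integral :: "real \<Rightarrow> (real \<Rightarrow> real \<Rightarrow> real) \<Rightarrow> real" where
  "bdry_integral p g =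
     integral {0..p} (\<lambda>t. g t 0) + integral {0..1-p} (\<lambda>t. g p t)
   + integral {0..p} (\<lambda>t. g t (1 - t)) + integral {0..1} (\<lambda>t. g 0 t)"

definition E :: "real \<Rightarrow> real \<times> real \<times> real \<Rightarrow> real" where
  "E p v = 8 * pi\<^sup>2 * (bdry_integral p (\<lambda>x y. (affn v x y) powi (-2)))\<^sup>2
             / integral (Delta p) (\<lambda>(x, y). (affn v x y) powi (-4))"

text \<open>Critical point (E p is scale invariant, so this is criticality on U p / R_+).\<close>
definition critical :: "real \<Rightarrow> real \<times> real \<times> real \<Rightarrow> bool" where
  "critical p v \<longleftrightarrow> (E p has_derivative (\<lambda>h. 0)) (at v)"

definition F :: "real \<Rightarrow> real" where
  "F p = p^4 - 4*p^3 + 16*p^2 - 16*p + 4"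

end

theory Submission
  imports Defs
begin


lemma int_inv4:
  fixes b A L :: real
  assumes L: "0 \<le> L" and nz: "\<And>t. 0 \<le> t \<Longrightarrow> t \<le> L \<Longrightarrow> b*t+A \<noteq> 0"
  shows "integral {0..L} (\<lambda>t. (b*t+A) powi (-4)) = L*(A^2+A*(b*L+A)+(b*L+A)^2)/(3*A^3*(b*L+A)^3)"
proof -
  define G where "G t = t*(A^2+A*(b*t+A)+(b*t+A)^2)/(3*A^3*(b*t+A)^3)" for t
  have b0: "A \<noteq> 0" using nz[of 0] L by simp
  have "((\<lambda>t. (b*t+A) powi (-4)) has_integral (G L - G 0)) {0..L}"
  proof (rule fundamental_theorem_of_calculus[OF L])
    fix t assume t: "t \<in> {0..L}"
    have n: "b*t+A \<noteq> 0" using nz t by auto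
    have "(G has_real_derivative (b*t+A) powi (-4)) (at t)"
      unfolding G_def
      apply (rule DERIV_cong)
       apply (rule derivative_eq_intros refl)+
      using n b0 apply (simp_all add: power_int_minus)
      apply (simp add: field_simps)
      apply algebra
      done
    then show "(G has_vector_derivative (b*t+A) powi (-4)) (at t within {0..L})"
      using has_real_derivative_iff_has_vector_derivative has_vector_derivative_at_within by blast
  qed
  then show ?thesis unfolding G_def by (simp add: integral_unique)
qed

lemma compact_Delta: "compact (Delta p)"
proof -
  have "Delta p = ({0..p} \<times> {0..1}) \<inter> {z. fst z + snd z \<le> 1}"
    unfolding Delta_def by auto
  moreover have "closed {z::real\<times>real. fst z + snd z \<le> 1}"
    by (intro closed_Collect_le continuous_intros)
  ultimately show ?thesis
    by (metis compact_Icc compact_Times closed_Int_compact Int_commute)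
qed

lemma Delta_pts:
  assumes "0 < p" "p < 1"
  shows "\<And>t. 0 \<le> t \<Longrightarrow> t \<le> p \<Longrightarrow> (t, 0) \<in> Delta p"
    and "\<And>t. 0 \<le> t \<Longrightarrow> t \<le> 1 - p \<Longrightarrow> (p, t) \<in> Delta p"
    and "\<And>t. 0 \<le> t \<Longrightarrow> t \<le> p \<Longrightarrow> (t, 1 - t) \<in> Delta p"
    and "\<And>t. 0 \<le> t \<Longrightarrow> t \<le> 1 \<Longrightarrow> (0, t) \<in> Delta p"
  using assms unfolding Delta_def by auto

definition Hn :: "real \<Rightarrow> real \<Rightarrow> real \<Rightarrow> real \<Rightarrow> real" where
  "Hn a b c x = x*(1-x)*((a*x+c)*(b*(1-x)+(a*x+c))+c*(b*(1-x)+(a*x+c))+c*(a*x+c))*(b+c)^2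
     + x*((b*(1-x)+(a*x+c))*(b+c)+c*(b+c)+c*(b*(1-x)+(a*x+c)))*(a*x+c)^2"
definition Hd :: "real \<Rightarrow> real \<Rightarrow> real \<Rightarrow> real \<Rightarrow> real" where
  "Hd a b c x = 6*(c^2*(a*x+c)^2*(b*(1-x)+(a*x+c))^2*(b+c)^2)"

definition dHn :: "real \<Rightarrow> real \<Rightarrow> real \<Rightarrow> real \<Rightarrow> real" where
  "dHn a b c x = 6*c^4 - 6*c^4*x + 12*b*c^3 - 24*b*c^3*x + 6*b*c^3*x^2 + 8*b^2*c^2 - 24*b^2*c^2*x + 12*b^2*c^2*x^2 + 2*b^3*c - 8*b^3*c*x + 6*b^3*c*x^2 + 24*a*c^3*x - 12*a*c^3*x^2 + 36*a*b*c^2*x - 42*a*b*c^2*x^2 + 4*a*b*c^2*x^3 + 16*a*b^2*c*x - 30*a*b^2*c*x^2 + 8*a*b^2*c*x^3 + 2*a*b^3*x - 6*a*b^3*x^2 + 4*a*b^3*x^3 + 24*a^2*c^2*x^2 - 4*a^2*c^2*x^3 + 24*a^2*b*c*x^2 - 16*a^2*b*c*x^3 + 6*a^2*b^2*x^2 - 8*a^2*b^2*x^3 + 8*a^3*c*x^3 + 4*a^3*b*x^3"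
definition dHd :: "real \<Rightarrow> real \<Rightarrow> real \<Rightarrow> real \<Rightarrow> real" where
  "dHd a b c x = -12*b*c^7 - 36*b^2*c^6 + 12*b^2*c^6*x - 36*b^3*c^5 + 24*b^3*c^5*x - 12*b^4*c^4 + 12*b^4*c^4*x + 24*a*c^7 + 84*a*b*c^6 - 72*a*b*c^6*x + 108*a*b^2*c^5 - 192*a*b^2*c^5*x + 36*a*b^2*c^5*x^2 + 60*a*b^3*c^4 - 168*a*b^3*c^4*x + 72*a*b^3*c^4*x^2 + 12*a*b^4*c^3 - 48*a*b^4*c^3*x + 36*a*b^4*c^3*x^2 + 72*a^2*c^6*x + 216*a^2*b*c^5*x - 108*a^2*b*c^5*x^2 + 228*a^2*b^2*c^4*x - 252*a^2*b^2*c^4*x^2 + 24*a^2*b^2*c^4*x^3 + 96*a^2*b^3*c^3*x - 180*a^2*b^3*c^3*x^2 + 48*a^2*b^3*c^3*x^3 + 12*a^2*b^4*c^2*x - 36*a^2*b^4*c^2*x^2 + 24*a^2*b^4*c^2*x^3 + 72*a^3*c^5*x^2 + 180*a^3*b*c^4*x^2 - 48*a^3*b*c^4*x^3 + 144*a^3*b^2*c^3*x^2 - 96*a^3*b^2*c^3*x^3 + 36*a^3*b^3*c^2*x^2 - 48*a^3*b^3*c^2*x^3 + 24*a^4*c^4*x^3 + 48*a^4*b*c^3*x^3 + 24*a^4*b^2*c^2*x^3"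

lemma frac_aux:
  fixes N A B c d :: real
  assumes "A \<noteq> 0" "B \<noteq> 0" "c \<noteq> 0" "d \<noteq> 0"
  shows "12 * N * c^4 * A * B * d^4 / ((6*(c^2*A^2*B^2*d^2)) * (6*(c^2*A^2*B^2*d^2))) = N / (3*A^3*B^3)"
  using assms by (simp add: field_simps power2_eq_square power3_eq_cube) (simp add: power_def)?

lemma H_deriv:
  fixes a b c x :: real
  assumes n: "c \<noteq> 0" "a*x+c \<noteq> 0" "b*(1-x)+(a*x+c) \<noteq> 0" "b+c \<noteq> 0"
  shows "((\<lambda>x. Hn a b c x / Hd a b c x) has_real_derivative
     (1-x)*((a*x+c)^2+(a*x+c)*(b*(1-x)+(a*x+c))+(b*(1-x)+(a*x+c))^2)/(3*(a*x+c)^3*(b*(1-x)+(a*x+c))^3)) (at x)"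
proof -
  have hd: "Hd a b c x \<noteq> 0" using n unfolding Hd_def by simp
  have 1: "(Hn a b c has_real_derivative dHn a b c x) (at x)"
    unfolding Hn_def dHn_def
    apply (rule DERIV_cong)
     apply (rule derivative_eq_intros refl)+
    apply (simp add: numeral_2_eq_2)
    apply algebra
    done
  have 2: "(Hd a b c has_real_derivative dHd a b c x) (at x)"
    unfolding Hd_def dHd_def
    apply (rule DERIV_cong)
     apply (rule derivative_eq_intros refl)+
    apply (simp add: numeral_2_eq_2)
    apply algebra
    done
  have 3: "(dHn a b c x * Hd a b c x - Hn a b c x * dHd a b c x) = 
     12 * ((1-x)*((a*x+c)^2+(a*x+c)*(b*(1-x)+(a*x+c))+(b*(1-x)+(a*x+c))^2)) * c^4 * (a*x+c) * (b*(1-x)+(a*x+c)) * (b+c)^4"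
    unfolding Hn_def dHn_def Hd_def dHd_def by algebra
  have 4: "(dHn a b c x * Hd a b c x - Hn a b c x * dHd a b c x) / (Hd a b c x * Hd a b c x)
     = (1-x)*((a*x+c)^2+(a*x+c)*(b*(1-x)+(a*x+c))+(b*(1-x)+(a*x+c))^2)/(3*(a*x+c)^3*(b*(1-x)+(a*x+c))^3)"
    apply (subst 3) apply (unfold Hd_def) apply (rule frac_aux) using n by auto
  show ?thesis using DERIV_divide[OF 1 2 hd] 4 by simp
qed


definition hc :: "real \<Rightarrow> real \<Rightarrow> real \<Rightarrow> real \<Rightarrow> real" where
  "hc a b c x = (1-x)*((a*x+c)^2+(a*x+c)*(b*(1-x)+(a*x+c))+(b*(1-x)+(a*x+c))^2)/(3*(a*x+c)^3*(b*(1-x)+(a*x+c))^3)"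

lemma inner_int:
  fixes a b c p x :: real
  assumes p: "0 < p" "p < 1" and nz: "\<And>x y. (x,y) \<in> Delta p \<Longrightarrow> affn (a,b,c) x y \<noteq> 0"
  shows "(\<integral>y. indicator (Delta p) (x,y) *\<^sub>R (affn (a,b,c) x y powi (-4)) \<partial>lborel) = indicator {0..p} x * hc a b c x"
proof (cases "x \<in> {0..p}")
  case True
  have ind: "indicator (Delta p) (x,y) = (indicator {0..1-x} y :: real)" for y
    using True unfolding Delta_def by (auto simp: indicator_def)
  have nzy: "b*y+(a*x+c) \<noteq> 0" if "0 \<le> y" "y \<le> 1-x" for y
    using nz[of x y] True that unfolding Delta_def affn_def by (auto simp: algebra_simps)
  have cont: "continuous_on {0..1-x} (\<lambda>y. affn (a,b,c) x y powi (-4))"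
    using nzy unfolding affn_def by (intro continuous_intros) (auto simp: algebra_simps)
  have "(\<integral>y. indicator (Delta p) (x,y) *\<^sub>R (affn (a,b,c) x y powi (-4)) \<partial>lborel)
      = (LINT y:{0..1-x}|lborel. affn (a,b,c) x y powi (-4))"
    unfolding set_lebesgue_integral_def ind by simp
  also have "\<dots> = integral {0..1-x} (\<lambda>y. affn (a,b,c) x y powi (-4))"
    by (rule set_borel_integral_eq_integral(2)[OF borel_integrable_atLeastAtMost'[OF cont]])
  also have "\<dots> = integral {0..1-x} (\<lambda>y. (b*y+(a*x+c)) powi (-4))"
    unfolding affn_def by (simp add: algebra_simps)
  also have "\<dots> = hc a b c x"
    unfolding hc_def using True p nzy by (subst int_inv4) auto
  finally show ?thesis using True by simp
next
  case False
  then have "indicator (Delta p) (x,y) = (0::real)" for y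
    unfolding Delta_def by (auto simp: indicator_def)
  then show ?thesis using False by simp
qed

lemma area_int:
  fixes a b c p :: real
  assumes p: "0 < p" "p < 1" and nz: "\<And>x y. (x,y) \<in> Delta p \<Longrightarrow> affn (a,b,c) x y \<noteq> 0"
  shows "integral (Delta p) (\<lambda>(x,y). affn (a,b,c) x y powi (-4)) = Hn a b c p / Hd a b c p"
proof -
  define g where "g = (\<lambda>z::real\<times>real. affn (a,b,c) (fst z) (snd z) powi (-4))"
  have geq: "(\<lambda>(x,y). affn (a,b,c) x y powi (-4)) = g" unfolding g_def by auto
  have cont: "continuous_on (Delta p) g"
    unfolding g_def affn_def using nz unfolding affn_def
    by (intro continuous_intros) auto
  have int: "integrable lborel (\<lambda>z. indicator (Delta p) z *\<^sub>R g z)"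
    by (rule borel_integrable_compact[OF compact_Delta cont])
  have int2: "integrable (lborel \<Otimes>\<^sub>M lborel) (\<lambda>z. indicator (Delta p) z *\<^sub>R g z)"
    using int by (simp add: lborel_prod)
  have A: "\<And>x. 0 \<le> x \<Longrightarrow> x \<le> p \<Longrightarrow> a*x+c \<noteq> 0"
    using nz unfolding Delta_def affn_def using p by force
  have B: "\<And>x. 0 \<le> x \<Longrightarrow> x \<le> p \<Longrightarrow> b*(1-x)+(a*x+c) \<noteq> 0"
  proof -
    fix x assume "0 \<le> x" "x \<le> p"
    then have "affn (a,b,c) x (1-x) \<noteq> 0" using nz p unfolding Delta_def by auto
    then show "b*(1-x)+(a*x+c) \<noteq> 0" unfolding affn_def by (simp add: algebra_simps)
  qed
  have c0: "c \<noteq> 0" using A[of 0] p by simp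
  have d0: "b + c \<noteq> 0" using nz[of 0 1] p unfolding Delta_def affn_def by simp
  have conth: "continuous_on {0..p} (hc a b c)"
    unfolding hc_def using A B by (intro continuous_intros) auto
  have "integral (Delta p) g = (LINT z:Delta p|lborel. g z)"
    by (rule set_borel_integral_eq_integral(2)[symmetric]) (use int in \<open>simp add: set_integrable_def\<close>)
  also have "\<dots> = (\<integral>z. indicator (Delta p) z *\<^sub>R g z \<partial>(lborel \<Otimes>\<^sub>M lborel))"
    by (simp add: set_lebesgue_integral_def lborel_prod)
  also have "\<dots> = (\<integral>x. (\<integral>y. indicator (Delta p) (x,y) *\<^sub>R g (x,y) \<partial>lborel) \<partial>lborel)"
    by (rule lborel_pair.integral_fst'[symmetric, OF int2])
  also have "\<dots> = (\<integral>x. indicator {0..p} x * hc a b c x \<partial>lborel)"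
    using inner_int[OF p nz] unfolding g_def by simp
  also have "\<dots> = (LINT x:{0..p}|lborel. hc a b c x)"
    by (simp add: set_lebesgue_integral_def)
  also have "\<dots> = integral {0..p} (hc a b c)"
    by (rule set_borel_integral_eq_integral(2)[OF borel_integrable_atLeastAtMost'[OF conth]])
  also have "\<dots> = Hn a b c p / Hd a b c p - Hn a b c 0 / Hd a b c 0"
  proof (rule integral_unique, rule fundamental_theorem_of_calculus)
    show "0 \<le> p" using p by simp
    fix x assume x: "x \<in> {0..p}"
    have "((\<lambda>x. Hn a b c x / Hd a b c x) has_real_derivative hc a b c x) (at x)"
      unfolding hc_def using x by (intro H_deriv c0 d0 A B) auto
    then show "((\<lambda>x. Hn a b c x / Hd a b c x) has_vector_derivative hc a b c x) (at x within {0..p})"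
      using has_real_derivative_iff_has_vector_derivative has_vector_derivative_at_within by blast
  qed
  also have "\<dots> = Hn a b c p / Hd a b c p" by (simp add: Hn_def)
  finally show ?thesis using geq by simp
qed


lemma int_inv2:
  fixes al be L :: real
  assumes L: "0 \<le> L" and nz: "\<And>t. 0 \<le> t \<Longrightarrow> t \<le> L \<Longrightarrow> al*t+be \<noteq> 0"
  shows "integral {0..L} (\<lambda>t. (al*t+be) powi (-2)) = L/(be*(al*L+be))"
proof -
  define G where "G t = t/(be*(al*t+be))" for t
  have b0: "be \<noteq> 0" using nz[of 0] L by simp
  have "((\<lambda>t. (al*t+be) powi (-2)) has_integral (G L - G 0)) {0..L}"
  proof (rule fundamental_theorem_of_calculus[OF L])
    fix t assume t: "t \<in> {0..L}"
    have n: "al*t+be \<noteq> 0" using nz t by auto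
    have "(G has_real_derivative (al*t+be) powi (-2)) (at t)"
      unfolding G_def
      apply (rule DERIV_cong)
       apply (rule derivative_eq_intros refl)+
      using n b0 apply (simp_all add: power_int_minus)
      apply (simp add: field_simps)
      apply algebra?
      done
    then show "(G has_vector_derivative (al*t+be) powi (-2)) (at t within {0..L})"
      using has_real_derivative_iff_has_vector_derivative has_vector_derivative_at_within by blast
  qed
  then show ?thesis unfolding G_def by (simp add: integral_unique)
qed

lemma bdry_int:
  fixes a b c p :: real
  assumes p: "0 < p" "p < 1" and nz: "\<And>x y. (x,y) \<in> Delta p \<Longrightarrow> affn (a,b,c) x y \<noteq> 0"
  shows "bdry_integral p (\<lambda>x y. affn (a,b,c) x y powi (-2)) =
    p/(c*(a*p+c)) + (1-p)/((a*p+c)*(b*(1-p)+(a*p+c))) + p/((b+c)*((a-b)*p+(b+c))) + 1/(c*(b*1+c))"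
proof -
  note D = Delta_pts[OF p]
  have 1: "integral {0..p} (\<lambda>t. affn (a,b,c) t 0 powi (-2)) = p/(c*(a*p+c))"
  proof -
    have "integral {0..p} (\<lambda>t. affn (a,b,c) t 0 powi (-2)) = integral {0..p} (\<lambda>t. (a*t+c) powi (-2))"
      by (simp add: affn_def)
    also have "\<dots> = p/(c*(a*p+c))"
      using p nz[OF D(1)] by (subst int_inv2) (auto simp: affn_def)
    finally show ?thesis .
  qed
  have 2: "integral {0..1-p} (\<lambda>t. affn (a,b,c) p t powi (-2)) = (1-p)/((a*p+c)*(b*(1-p)+(a*p+c)))"
  proof -
    have "integral {0..1-p} (\<lambda>t. affn (a,b,c) p t powi (-2)) = integral {0..1-p} (\<lambda>t. (b*t+(a*p+c)) powi (-2))"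
      by (simp add: affn_def algebra_simps)
    also have "\<dots> = (1-p)/((a*p+c)*(b*(1-p)+(a*p+c)))"
      using p nz[OF D(2)] by (subst int_inv2) (auto simp: affn_def algebra_simps)
    finally show ?thesis .
  qed
  have 3: "integral {0..p} (\<lambda>t. affn (a,b,c) t (1-t) powi (-2)) = p/((b+c)*((a-b)*p+(b+c)))"
  proof -
    have "integral {0..p} (\<lambda>t. affn (a,b,c) t (1-t) powi (-2)) = integral {0..p} (\<lambda>t. ((a-b)*t+(b+c)) powi (-2))"
      by (simp add: affn_def algebra_simps)
    also have "\<dots> = p/((b+c)*((a-b)*p+(b+c)))"
      using p nz[OF D(3)] by (subst int_inv2) (auto simp: affn_def algebra_simps)
    finally show ?thesis .
  qed
  have 4: "integral {0..1} (\<lambda>t. affn (a,b,c) 0 t powi (-2)) = 1/(c*(b*1+c))"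
  proof -
    have "integral {0..1} (\<lambda>t. affn (a,b,c) 0 t powi (-2)) = integral {0..1} (\<lambda>t. (b*t+c) powi (-2))"
      by (simp add: affn_def)
    also have "\<dots> = 1/(c*(b*1+c))"
      using p nz[OF D(4)] by (subst int_inv2) (auto simp: affn_def)
    finally show ?thesis .
  qed
  show ?thesis unfolding bdry_integral_def 1 2 3 4 by simp
qed

definition Bn :: "real \<Rightarrow> real \<Rightarrow> real \<Rightarrow> real \<Rightarrow> real \<Rightarrow> real" where
 "Bn p f1 f2 f3 f4 = p*f3*f4 + (1-p)*f1*f4 + p*f1*f2 + f2*f3"
definition Dn :: "real \<Rightarrow> real \<Rightarrow> real \<Rightarrow> real \<Rightarrow> real \<Rightarrow> real" where
 "Dn p f1 f2 f3 f4 = p*(1-p)*(f2*f3+f1*f3+f1*f2)*f4^2 + p*(f3*f4+f1*f4+f1*f3)*f2^2"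
definition dBn :: "real \<Rightarrow> real \<Rightarrow> real \<Rightarrow> real \<Rightarrow> real \<Rightarrow> real \<Rightarrow> real \<Rightarrow> real \<Rightarrow> real \<Rightarrow> real" where
 "dBn p f1 f2 f3 f4 e1 e2 e3 e4 = f4*e1 + f3*e2 + f2*e3 + f1*e4 + p*f4*e3 - p*f4*e1 + p*f3*e4 + p*f2*e1 - p*f1*e4 + p*f1*e2"
definition dDn :: "real \<Rightarrow> real \<Rightarrow> real \<Rightarrow> real \<Rightarrow> real \<Rightarrow> real \<Rightarrow> real \<Rightarrow> real \<Rightarrow> real \<Rightarrow> real" where
 "dDn p f1 f2 f3 f4 e1 e2 e3 e4 = p*f3*f4^2*e2 + p*f3*f4^2*e1 + p*f2*f4^2*e3 + p*f2*f4^2*e1 + 2*p*f2*f3*f4*e4 + 2*p*f2*f3*f4*e2 + p*f2^2*f4*e3 + p*f2^2*f4*e1 + p*f2^2*f3*e4 + p*f2^2*f3*e1 + p*f1*f4^2*e3 + p*f1*f4^2*e2 + 2*p*f1*f3*f4*e4 + 2*p*f1*f2*f4*e4 + 2*p*f1*f2*f4*e2 + 2*p*f1*f2*f3*e2 + p*f1*f2^2*e4 + p*f1*f2^2*e3 - p^2*f3*f4^2*e2 - p^2*f3*f4^2*e1 - p^2*f2*f4^2*e3 - p^2*f2*f4^2*e1 - 2*p^2*f2*f3*f4*e4 - p^2*f1*f4^2*e3 - p^2*f1*f4^2*e2 - 2*p^2*f1*f3*f4*e4 - 2*p^2*f1*f2*f4*e4"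


definition v1 :: "real \<Rightarrow> real\<times>real\<times>real \<Rightarrow> real" where "v1 p w = snd (snd w)"
definition v2 :: "real \<Rightarrow> real\<times>real\<times>real \<Rightarrow> real" where "v2 p w = fst w * p + snd (snd w)"
definition v3 :: "real \<Rightarrow> real\<times>real\<times>real \<Rightarrow> real" where "v3 p w = fst w * p + fst (snd w) * (1-p) + snd (snd w)"
definition v4 :: "real \<Rightarrow> real\<times>real\<times>real \<Rightarrow> real" where "v4 p w = fst (snd w) + snd (snd w)"

definition Eloc :: "real \<Rightarrow> real\<times>real\<times>real \<Rightarrow> real" where
  "Eloc p w = 48*pi^2*(Bn p (v1 p w) (v2 p w) (v3 p w) (v4 p w))^2 / Dn p (v1 p w) (v2 p w) (v3 p w) (v4 p w)"

lemma E_eq_Eloc: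
  assumes p: "0 < p" "p < 1" and nz: "\<And>x y. (x,y) \<in> Delta p \<Longrightarrow> affn w x y \<noteq> 0"
  shows "E p w = Eloc p w"
proof -
  obtain a b c where w: "w = (a,b,c)" by (cases w) auto
  have nz': "\<And>x y. (x,y) \<in> Delta p \<Longrightarrow> affn (a,b,c) x y \<noteq> 0" using nz w by simp
  define f1 where "f1 = c"
  define f2 where "f2 = a*p+c"
  define f3 where "f3 = a*p+b*(1-p)+c"
  define f4 where "f4 = b+c"
  have n1: "f1 \<noteq> 0" using nz'[of 0 0] p unfolding Delta_def affn_def f1_def by simp
  have n2: "f2 \<noteq> 0" using nz'[of p 0] p unfolding Delta_def affn_def f2_def by simp
  have n3: "f3 \<noteq> 0" using nz'[of p "1-p"] p unfolding Delta_def affn_def f3_def by simp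
  have n4: "f4 \<noteq> 0" using nz'[of 0 1] p unfolding Delta_def affn_def f4_def by simp
  have B0: "bdry_integral p (\<lambda>x y. affn w x y powi (-2)) = p/(f1*f2) + (1-p)/(f2*f3) + p/(f4*f3) + 1/(f1*f4)"
  proof -
    have e: "b*(1-p)+(a*p+c) = f3" "(a-b)*p+(b+c) = f3" "a*p+c = f2" "b*1+c = f4" "b+c = f4" "b*(1-p)+f2 = f3" "(a-b)*p+f4 = f3"
      unfolding f1_def f2_def f3_def f4_def by (simp_all add: algebra_simps)
    have "bdry_integral p (\<lambda>x y. affn w x y powi (-2)) = p/(c*(a*p+c)) + (1-p)/((a*p+c)*(b*(1-p)+(a*p+c))) + p/((b+c)*((a-b)*p+(b+c))) + 1/(c*(b*1+c))"
      using bdry_int[OF p nz'] w by simp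
    also have "\<dots> = p/(f1*f2) + (1-p)/(f2*f3) + p/(f4*f3) + 1/(f1*f4)"
      by (simp only: e) (simp add: f1_def)
    finally show ?thesis .
  qed
  have B: "bdry_integral p (\<lambda>x y. affn w x y powi (-2)) = Bn p f1 f2 f3 f4 / (f1*f2*f3*f4)"
    unfolding B0 Bn_def using n1 n2 n3 n4 by (simp add: field_simps)
  have Dint: "integral (Delta p) (\<lambda>(x,y). affn w x y powi (-4)) = Dn p f1 f2 f3 f4 / (6*(f1*f2*f3*f4)^2)"
  proof -
    have "Hn a b c p = Dn p f1 f2 f3 f4" unfolding Hn_def Dn_def f1_def f2_def f3_def f4_def by algebra
    moreover have "Hd a b c p = 6*(f1*f2*f3*f4)^2" unfolding Hd_def f1_def f2_def f3_def f4_def by algebra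
    ultimately show ?thesis using area_int[OF p nz'] w by simp
  qed
  have P: "f1*f2*f3*f4 \<noteq> 0" using n1 n2 n3 n4 by simp
  have "E p w = 8 * pi\<^sup>2 * (Bn p f1 f2 f3 f4 / (f1*f2*f3*f4))\<^sup>2 / (Dn p f1 f2 f3 f4 / (6*(f1*f2*f3*f4)^2))"
    unfolding E_def B Dint ..
  also have "\<dots> = 48*pi^2*(Bn p f1 f2 f3 f4)^2 / Dn p f1 f2 f3 f4"
    using P by (cases "Dn p f1 f2 f3 f4 = 0") (simp_all add: field_simps power2_eq_square)
  also have "\<dots> = Eloc p w"
    unfolding Eloc_def w v1_def v2_def v3_def v4_def f1_def f2_def f3_def f4_def by simp
  finally show ?thesis .
qed



lemma neg_on_Delta:
  assumes p: "0 < p" "p < 1" and s: "v1 p w < 0" "v2 p w < 0" "v3 p w < 0" "v4 p w < 0"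
    and xy: "(x,y) \<in> Delta p"
  shows "affn w x y < 0"
proof -
  obtain a b c where w: "w = (a,b,c)" by (cases w) auto
  have s': "c < 0" "a*p+c < 0" "a*p+b*(1-p)+c < 0" "b+c < 0"
    using s unfolding w v1_def v2_def v3_def v4_def by auto
  have x: "0 \<le> x" "x \<le> p" "0 \<le> y" "x + y \<le> 1" using xy unfolding Delta_def by auto
  define l where "l = x/p"
  have l: "0 \<le> l" "l \<le> 1" using x p unfolding l_def by (auto simp: field_simps)
  have lp: "l*p = x" using p unfolding l_def by simp
  have A0: "a*x+c < 0"
  proof -
    have "a*x+c = (1-l)*c + l*(a*p+c)" using lp by (simp add: algebra_simps)
    also have "\<dots> < 0" using l s' by (intro convex_bound_lt) auto
    finally show ?thesis .
  qed
  have A1: "a*x+b*(1-x)+c < 0"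
  proof -
    have "a*x+b*(1-x)+c = (1-l)*(b+c) + l*(a*p+b*(1-p)+c)" using lp by (simp add: algebra_simps)
    also have "\<dots> < 0" using l s' by (intro convex_bound_lt) auto
    finally show ?thesis .
  qed
  have x1: "1 - x > 0" using x p by simp
  define m where "m = y/(1-x)"
  have m: "0 \<le> m" "m \<le> 1" using x x1 unfolding m_def by (auto simp: field_simps)
  have mx: "m*(1-x) = y" using x1 unfolding m_def by simp
  have "affn w x y = (1-m)*(a*x+c) + m*(a*x+b*(1-x)+c)"
    unfolding w affn_def mx[symmetric] by (simp add: algebra_simps)
  also have "\<dots> < 0" using m A0 A1 by (intro convex_bound_lt) auto
  finally show ?thesis .
qed

lemma v_uminus: "v1 p (-w) = - v1 p w" "v2 p (-w) = - v2 p w" "v3 p (-w) = - v3 p w" "v4 p (-w) = - v4 p w"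
  "affn (-w) x y = - affn w x y"
  unfolding v1_def v2_def v3_def v4_def affn_def by (cases w; simp add: algebra_simps)+

lemma pos_on_Delta:
  assumes p: "0 < p" "p < 1" and s: "v1 p w > 0" "v2 p w > 0" "v3 p w > 0" "v4 p w > 0"
    and xy: "(x,y) \<in> Delta p"
  shows "affn w x y > 0"
  using neg_on_Delta[OF p _ _ _ _ xy, of "-w"] s by (simp add: v_uminus)

lemma cont_v: "continuous_on UNIV (v1 p)" "continuous_on UNIV (v2 p)" "continuous_on UNIV (v3 p)" "continuous_on UNIV (v4 p)"
  unfolding v1_def v2_def v3_def v4_def by (intro continuous_intros)+

lemma local_region:
  assumes p: "0 < p" "p < 1"
    and sign: "(v1 p v < 0 \<and> v2 p v < 0 \<and> v3 p v < 0 \<and> v4 p v < 0) \<or> (v1 p v > 0 \<and> v2 p v > 0 \<and> v3 p v > 0 \<and> v4 p v > 0)"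
  shows "\<exists>W. open W \<and> v \<in> W \<and> (\<forall>w\<in>W. Eloc p w = E p w)"
  using sign
proof
  assume s: "v1 p v < 0 \<and> v2 p v < 0 \<and> v3 p v < 0 \<and> v4 p v < 0"
  let ?W = "{w. v1 p w < 0} \<inter> {w. v2 p w < 0} \<inter> {w. v3 p w < 0} \<inter> {w. v4 p w < 0}"
  have "open ?W" using cont_v[of p]
    by (intro open_Int open_Collect_less) (auto intro: continuous_intros)
  moreover have "v \<in> ?W" using s by auto
  moreover have "\<forall>w\<in>?W. Eloc p w = E p w"
  proof
    fix w assume "w \<in> ?W"
    then have "\<And>x y. (x,y) \<in> Delta p \<Longrightarrow> affn w x y \<noteq> 0"
      using neg_on_Delta[OF p] by (metis (no_types, lifting) IntE mem_Collect_eq order_less_irrefl)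
    then show "Eloc p w = E p w" using E_eq_Eloc[OF p] by simp
  qed
  ultimately show ?thesis by blast
next
  assume s: "v1 p v > 0 \<and> v2 p v > 0 \<and> v3 p v > 0 \<and> v4 p v > 0"
  let ?W = "{w. 0 < v1 p w} \<inter> {w. 0 < v2 p w} \<inter> {w. 0 < v3 p w} \<inter> {w. 0 < v4 p w}"
  have "open ?W" using cont_v[of p]
    by (intro open_Int open_Collect_less) (auto intro: continuous_intros)
  moreover have "v \<in> ?W" using s by auto
  moreover have "\<forall>w\<in>?W. Eloc p w = E p w"
  proof
    fix w assume "w \<in> ?W"
    then have "\<And>x y. (x,y) \<in> Delta p \<Longrightarrow> affn w x y \<noteq> 0"
      using pos_on_Delta[OF p] by (metis (no_types, lifting) IntE mem_Collect_eq order_less_irrefl)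
    then show "Eloc p w = E p w" using E_eq_Eloc[OF p] by simp
  qed
  ultimately show ?thesis by blast
qed

lemma dB_deriv:
  "((\<lambda>w. Bn p (v1 p w) (v2 p w) (v3 p w) (v4 p w)) has_derivative
    (\<lambda>h. dBn p (v1 p v) (v2 p v) (v3 p v) (v4 p v) (snd (snd h)) (fst h * p + snd (snd h))
          (fst h * p + fst (snd h) * (1-p) + snd (snd h)) (fst (snd h) + snd (snd h)))) (at v)"
  unfolding Bn_def dBn_def v1_def v2_def v3_def v4_def
  apply (rule has_derivative_eq_rhs)
   apply (rule derivative_eq_intros refl)+
  apply (rule ext)
  apply simp
  apply algebra
  done

lemma dD_deriv:
  "((\<lambda>w. Dn p (v1 p w) (v2 p w) (v3 p w) (v4 p w)) has_derivative
    (\<lambda>h. dDn p (v1 p v) (v2 p v) (v3 p v) (v4 p v) (snd (snd h)) (fst h * p + snd (snd h))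
          (fst h * p + fst (snd h) * (1-p) + snd (snd h)) (fst (snd h) + snd (snd h)))) (at v)"
  unfolding Dn_def dDn_def v1_def v2_def v3_def v4_def
  apply (rule has_derivative_eq_rhs)
   apply (rule derivative_eq_intros refl)+
  apply (rule ext)
  apply simp
  apply algebra
  done

lemma fin_aux:
  fixes B D dB dD :: real
  assumes "2*D*dB - B*dD = 0" "D \<noteq> 0"
  shows "- (48*pi^2*B^2)*(inverse D * dD * inverse D) + 48*pi^2*(real 2*dB*B^(2-1))/D = 0"
proof -
  have e: "B*dD = 2*D*dB" using assms(1) by simp
  have "48*pi^2*B^2*(inverse D * dD * inverse D) = 48*pi^2*B*(B*dD)*inverse D*inverse D"
    by (simp add: power2_eq_square algebra_simps)
  also have "\<dots> = 96*pi^2*B*dB*(D*inverse D)*inverse D" unfolding e by (simp add: algebra_simps)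
  also have "\<dots> = 48*pi^2*(real 2*dB*B^(2-1))/D" using assms(2) by (simp add: divide_inverse algebra_simps)
  finally show ?thesis by simp
qed

lemma crit_lemma:
  assumes p: "0 < p" "p < 1"
    and sign: "(v1 p v < 0 \<and> v2 p v < 0 \<and> v3 p v < 0 \<and> v4 p v < 0) \<or> (v1 p v > 0 \<and> v2 p v > 0 \<and> v3 p v > 0 \<and> v4 p v > 0)"
    and Dnz: "Dn p (v1 p v) (v2 p v) (v3 p v) (v4 p v) \<noteq> 0"
    and key: "\<And>h1 h2 h3. 2 * Dn p (v1 p v) (v2 p v) (v3 p v) (v4 p v)
        * dBn p (v1 p v) (v2 p v) (v3 p v) (v4 p v) h3 (h1*p+h3) (h1*p+h2*(1-p)+h3) (h2+h3)
      - Bn p (v1 p v) (v2 p v) (v3 p v) (v4 p v)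
        * dDn p (v1 p v) (v2 p v) (v3 p v) (v4 p v) h3 (h1*p+h3) (h1*p+h2*(1-p)+h3) (h2+h3) = 0"
  shows "critical p v"
proof -
  obtain W where W: "open W" "v \<in> W" "\<forall>w\<in>W. Eloc p w = E p w"
    using local_region[OF p sign] by blast
  have "(Eloc p has_derivative (\<lambda>h. 0)) (at v)"
    unfolding Eloc_def
    apply (rule has_derivative_eq_rhs)
     apply (rule derivative_eq_intros dB_deriv dD_deriv refl Dnz)+
    apply (rule ext)
    subgoal for h
      using key[of "snd (snd h)" "fst h" "fst (snd h)"] Dnz
      by (intro fin_aux)
    done
  then show ?thesis unfolding critical_def
    using has_derivative_transform_within_open[OF _ W(1) W(2)] W(3) by blast
qed



definition KEY where "KEY p f1 f2 f3 f4 h1 h2 h3 = 2 * Dn p f1 f2 f3 f4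
        * dBn p f1 f2 f3 f4 h3 (h1*p+h3) (h1*p+h2*(1-p)+h3) (h2+h3)
      - Bn p f1 f2 f3 f4
        * dDn p f1 f2 f3 f4 h3 (h1*p+h3) (h1*p+h2*(1-p)+h3) (h2+h3)"

lemma Dn_pos:
  assumes p: "0 < p" "p < 1"
    and s: "(f1 < 0 \<and> f2 < 0 \<and> f3 < 0 \<and> f4 < 0) \<or> (f1 > 0 \<and> f2 > 0 \<and> f3 > 0 \<and> f4 > (0::real))"
  shows "Dn p f1 f2 f3 f4 > 0"
proof -
  have pp: "f1*f2 > 0" "f1*f3 > 0" "f1*f4 > 0" "f2*f3 > 0" "f3*f4 > 0" "f2^2 > 0" "f4^2 > 0"
    using s by (auto simp: mult_pos_pos mult_neg_neg)
  have q: "p*(1-p) > 0" using p by simp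
  have S1: "f2*f3+f1*f3+f1*f2 > 0" using pp by simp
  have S2: "f3*f4+f1*f4+f1*f3 > 0" using pp by simp
  have t1: "p*(1-p)*(f2*f3+f1*f3+f1*f2)*f4^2 > 0" using mult_pos_pos[OF mult_pos_pos[OF q S1] pp(7)] .
  have t2: "p*(f3*f4+f1*f4+f1*f3)*f2^2 > 0" using mult_pos_pos[OF mult_pos_pos[OF p(1) S2] pp(6)] .
  show ?thesis unfolding Dn_def using t1 t2 by simp
qed

lemma crit_KEY:
  assumes p: "0 < p" "p < 1"
    and sign: "(v1 p v < 0 \<and> v2 p v < 0 \<and> v3 p v < 0 \<and> v4 p v < 0) \<or> (v1 p v > 0 \<and> v2 p v > 0 \<and> v3 p v > 0 \<and> v4 p v > 0)"
    and key: "\<And>h1 h2 h3. KEY p (v1 p v) (v2 p v) (v3 p v) (v4 p v) h1 h2 h3 = 0"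
  shows "critical p v"
  using Dn_pos[OF p sign] key unfolding KEY_def
  by (intro crit_lemma[OF p sign]) auto

lemma key1:
  fixes p s h1 h2 h3 :: real
  assumes "s^2 = 1 - p"
  shows "KEY p (-(1+s)) (-s*(1+s)) (-s*(1+s)) (-(1+s)) h1 h2 h3 = 0"
proof -
  have "KEY p (-(1+s)) (-s*(1+s)) (-s*(1+s)) (-(1+s)) h1 h2 h3 = (-2*p*h3 - p*h2 - 12*p* s*h3 - 6*p* s*h2 - 28*p* s^2*h3 - 14*p* s^2*h2 - 28*p* s^3*h3 - 14*p* s^3*h2 + 28*p* s^5*h3 + 14*p* s^5*h2 + 28*p* s^6*h3 + 14*p* s^6*h2 + 12*p* s^7*h3 + 6*p* s^7*h2 + 2*p* s^8*h3 + p* s^8*h2 + 2*p^2*h3 + 2*p^2*h2 - 2*p^2*h1 + 14*p^2* s*h3 + 14*p^2* s*h2 - 14*p^2* s*h1 + 34*p^2* s^2*h3 + 38*p^2* s^2*h2 - 42*p^2* s^2*h1 + 30*p^2* s^3*h3 + 50*p^2* s^3*h2 - 70*p^2* s^3*h1 - 10*p^2* s^4*h3 + 30*p^2* s^4*h2 - 70*p^2* s^4*h1 - 38*p^2* s^5*h3 + 2*p^2* s^5*h2 - 42*p^2* s^5*h1 - 26*p^2* s^6*h3 - 6*p^2* s^6*h2 - 14*p^2* s^6*h1 - 6*p^2* s^7*h3 - 2*p^2* s^7*h2 - 2*p^2* s^7*h1 - p^3*h2 + 2*p^3*h1 - 8*p^3* s*h2 + 16*p^3* s*h1 - 25*p^3*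 s^2*h2 + 50*p^3* s^2*h1 - 40*p^3* s^3*h2 + 80*p^3* s^3*h1 - 35*p^3* s^4*h2 + 70*p^3* s^4*h1 - 16*p^3* s^5*h2 + 32*p^3* s^5*h1 - 3*p^3* s^6*h2 + 6*p^3* s^6*h1) * (p - (1 - s^2))"
    unfolding KEY_def Dn_def dBn_def Bn_def dDn_def by algebra
  then show ?thesis using assms by simp
qed

lemma key2:
  fixes p c h1 h2 h3 :: real
  assumes "(9*p-8)*(2*c-p)^2-p*(3*p-2*c)^2 = 0" "p \<noteq> 1"
  shows "KEY p c (c-p) (c-p) c h1 h2 h3 = 0"
proof -
  have "(-32+32*p)^4 * KEY p c (c-p) (c-p) c h1 h2 h3 = (524288*p^3*c*h3 + 262144*p^3*c*h2 - 262144*p^3*c^2*h3 - 393216*p^3*c^2*h2 + 524288*p^3*c^2*h1 + 131072*p^3*c^3*h2 - 262144*p^3*c^3*h1 - 262144*p^4*h3 - 131072*p^4*h2 - 2097152*p^4*c*h3 - 917504*p^4*c*h2 - 262144*p^4*c*h1 + 1048576*p^4*c^2*h3 + 1572864*p^4*c^2*h2 - 2097152*p^4*c^2*h1 - 524288*p^4*c^3*h2 + 1048576*p^4*c^3*h1 + 1048576*p^5*h3 + 524288*p^5*h2 + 3145728*p^5*c*h3 + 1048576*p^5*c*h2 + 1048576*p^5*c*h1 - 1572864*p^5*c^2*h3 - 2359296*p^5*c^2*h2 + 3145728*p^5*c^2*h1 + 786432*p^5*c^3*h2 - 1572864*p^5*c^3*h1 - 1572864*p^6*h3 - 786432*p^6*h2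 - 2097152*p^6*c*h3 - 262144*p^6*c*h2 - 1572864*p^6*c*h1 + 1048576*p^6*c^2*h3 + 1572864*p^6*c^2*h2 - 2097152*p^6*c^2*h1 - 524288*p^6*c^3*h2 + 1048576*p^6*c^3*h1 + 1048576*p^7*h3 + 524288*p^7*h2 + 524288*p^7*c*h3 - 262144*p^7*c*h2 + 1048576*p^7*c*h1 - 262144*p^7*c^2*h3 - 393216*p^7*c^2*h2 + 524288*p^7*c^2*h1 + 131072*p^7*c^3*h2 - 262144*p^7*c^3*h1 - 262144*p^8*h3 - 131072*p^8*h2 + 131072*p^8*c*h2 - 262144*p^8*c*h1) * ((9*p-8)*(2*c-p)^2-p*(3*p-2*c)^2)"
    unfolding KEY_def Dn_def dBn_def Bn_def dDn_def by algebra
  then show ?thesis using assms by simp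
qed

lemma key3:
  fixes p t h1 h2 h3 :: real
  assumes "t^2 = F p"
  shows "KEY p (p^2+2*p-2-t) (p^3-3*p^2+4*p-2+t*(p-1)) (p^3-3*p^2+4*p-2+t*(1-p)) (p^2+2*p-2+t) h1 h2 h3 = 0"
proof -
  have "KEY p (p^2+2*p-2-t) (p^3-3*p^2+4*p-2+t*(p-1)) (p^3-3*p^2+4*p-2+t*(1-p)) (p^2+2*p-2+t) h1 h2 h3
     = (64*p*t*h2 + 64*p*t^2*h3 + 32*p*t^2*h2 - 384*p^2*t*h2 - 288*p^2*t^2*h3 - 160*p^2*t^2*h2 + 32*p^2*t^2*h1 - 64*p^3*h3 - 64*p^3*h1 + 976*p^3*t*h2 + 528*p^3*t^2*h3 + 328*p^3*t^2*h2 - 128*p^3*t^2*h1 + 448*p^4*h3 + 32*p^4*h2 + 384*p^4*h1 - 1360*p^4*t*h2 - 512*p^4*t^2*h3 - 352*p^4*t^2*h2 + 192*p^4*t^2*h1 - 1312*p^5*h3 - 192*p^5*h2 - 928*p^5*h1 + 1104*p^5*t*h2 + 280*p^5*t^2*h3 + 204*p^5*t^2*h2 - 128*p^5*t^2*h1 + 2096*p^6*h3 + 480*p^6*h2 + 1136*p^6*h1 - 480*p^6*t*h2 - 76*p^6*t^2*h3 - 52*p^6*t^2*h2 + 28*p^6*t^2*h1 - 2000*p^7*h3 - 648*p^7*h2 - 704*p^7*h1 + 48*p^7*t*h2 - 4*p^7*t^2*h2 + 8*p^7*t^2*h1 + 1168*p^8*h3 + 512*p^8*h2 + 144*p^8*h1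 + 48*p^8*t*h2 + 4*p^8*t^2*h3 + 4*p^8*t^2*h2 - 4*p^8*t^2*h1 - 392*p^9*h3 - 236*p^9*h2 + 80*p^9*h1 - 16*p^9*t*h2 + 44*p^10*h3 + 52*p^10*h2 - 60*p^10*h1 + 16*p^11*h3 + 4*p^11*h2 + 8*p^11*h1 - 4*p^12*h3 - 4*p^12*h2 + 4*p^12*h1) * (t^2 - (p^4 - 4*p^3 + 16*p^2 - 16*p + 4))"
    unfolding KEY_def Dn_def dBn_def Bn_def dDn_def by algebra
  then show ?thesis using assms by (simp add: F_def)
qed



lemma negU:
  assumes p: "0 < p" "p < 1" and s: "v1 p v < 0" "v2 p v < 0" "v3 p v < 0" "v4 p v < 0"
  shows "- v \<in> U p"
  unfolding U_def using neg_on_Delta[OF p s] by (auto simp: v_uminus)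

lemma posU:
  assumes p: "0 < p" "p < 1" and s: "v1 p v > 0" "v2 p v > 0" "v3 p v > 0" "v4 p v > 0"
  shows "v \<in> U p"
  unfolding U_def using pos_on_Delta[OF p s] by auto

lemma part1:
  assumes p: "0 < p" "p < 1"
  shows "let v = (1, 0, p * (1 - sqrt (1 - p)) / (2 * sqrt (1 - p) + p - 2))
       in (v \<in> U p \<or> - v \<in> U p) \<and> critical p v"
proof -
  define s where "s = sqrt (1-p)"
  have s2: "s^2 = 1-p" using p unfolding s_def by simp
  have s0: "0 < s" "s < 1" using p by (auto simp: s_def)
  have pe: "p = 1 - s^2" using s2 by simp
  have c: "p * (1 - s) / (2 * s + p - 2) = -(1+s)"
  proof -
    have d: "2* s+p-2 = -((1-s)^2)" unfolding pe by (simp add: power2_eq_square algebra_simps)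
    have d0: "2* s+p-2 \<noteq> 0" unfolding d using s0 by simp
    have "p*(1-s) = -(1+s)*(2* s+p-2)" unfolding pe by (simp add: power2_eq_square algebra_simps)
    then show ?thesis using d0 by (simp add: field_simps)
  qed
  define v where "v = (1::real, 0::real, -(1+s))"
  have vv: "v1 p v = -(1+s)" "v2 p v = -s*(1+s)" "v3 p v = -s*(1+s)" "v4 p v = -(1+s)"
    unfolding v_def v1_def v2_def v3_def v4_def pe by (simp_all add: power2_eq_square algebra_simps)
  have sg: "v1 p v < 0" "v2 p v < 0" "v3 p v < 0" "v4 p v < 0" unfolding vv using s0 by auto
  have "critical p v"
    by (rule crit_KEY[OF p]) (use sg in simp, unfold vv, rule key1[OF s2])
  moreover have "- v \<in> U p" using negU[OF p sg] .
  ultimately show ?thesis unfolding Let_def s_def[symmetric] c v_def by simp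
qed

lemma part2:
  assumes p: "8/9 < p" "p < 1" and sig: "\<sigma> = 1 \<or> \<sigma> = -1"
  shows "let r = sqrt (9 * p\<^sup>2 - 8 * p);
            v = (-1, 0, p * (3 * p + \<sigma> * r) / (2 * (p + \<sigma> * r)))
        in (v \<in> U p \<or> - v \<in> U p) \<and> critical p v"
proof -
  have p0: "0 < p" using p by simp
  define r where "r = sqrt (9 * p\<^sup>2 - 8 * p)"
  have nn: "9 * p\<^sup>2 - 8 * p > 0"
  proof -
    have "p*(9*p-8) > 0" using p by (intro mult_pos_pos) auto
    then show ?thesis by (simp add: power2_eq_square algebra_simps)
  qed
  have r2: "r^2 = 9 * p\<^sup>2 - 8 * p" unfolding r_def using nn by (intro real_sqrt_pow2) linarith
  have r0: "r \<ge> 0" unfolding r_def using nn by simp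
  have rp: "r < p"
  proof -
    have "8*p*(1-p) > 0" using p by (intro mult_pos_pos) auto
    then have "9 * p\<^sup>2 - 8 * p < p^2" by (simp add: power2_eq_square algebra_simps)
    then have "r < sqrt (p^2)" unfolding r_def by (rule real_sqrt_less_mono)
    then show ?thesis using p0 by simp
  qed
  define u where "u = \<sigma> * r"
  have u2: "u^2 = 9 * p\<^sup>2 - 8 * p" using sig r2 unfolding u_def by (auto simp: power2_eq_square)
  have ub: "-r \<le> u" "u \<le> r" using sig r0 unfolding u_def by auto
  have pu: "p + u > 0" "p - u > 0" "3*p + u > 0" using ub rp r0 by auto
  define c where "c = p * (3 * p + u) / (2 * (p + u))"
  have hc: "c * (2 * (p + u)) = p * (3 * p + u)" unfolding c_def using pu by simp
  have cpos: "c > 0" unfolding c_def using pu p0 by simp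
  have cp: "c - p > 0"
  proof -
    have "c - p = p * (p - u) / (2 * (p + u))" unfolding c_def using pu by (simp add: field_simps)
    then show ?thesis using pu p0 by simp
  qed
  have quad: "(9*p-8)*(2*c-p)^2-p*(3*p-2*c)^2 = 0"
  proof -
    have l1: "u*(2*c-p) = 3*p^2-2*p*c" using hc by (simp add: algebra_simps power2_eq_square)
    have "u^2*(2*c-p)^2 = (3*p^2-2*p*c)^2" unfolding l1[symmetric] by (simp add: power_mult_distrib)
    then have l2: "(9 * p\<^sup>2 - 8 * p)*(2*c-p)^2 = (3*p^2-2*p*c)^2" unfolding u2 .
    have "p * ((9*p-8)*(2*c-p)^2-p*(3*p-2*c)^2) = (9 * p\<^sup>2 - 8 * p)*(2*c-p)^2 - (3*p^2-2*p*c)^2"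
      by algebra
    then have "p * ((9*p-8)*(2*c-p)^2-p*(3*p-2*c)^2) = 0" using l2 by simp
    then show ?thesis using p0 by simp
  qed
  define v where "v = (-1::real, 0::real, c)"
  have vv: "v1 p v = c" "v2 p v = c - p" "v3 p v = c - p" "v4 p v = c"
    unfolding v_def v1_def v2_def v3_def v4_def by simp_all
  have sg: "v1 p v > 0" "v2 p v > 0" "v3 p v > 0" "v4 p v > 0" unfolding vv using cpos cp by auto
  have pp: "0 < p" "p < 1" using p by auto
  have "critical p v"
    by (rule crit_KEY[OF pp]) (use sg in simp, unfold vv, rule key2[OF quad], use p in simp)
  moreover have "v \<in> U p" using posU[OF pp sg] .
  ultimately show ?thesis unfolding Let_def r_def[symmetric] u_def[symmetric] c_def[symmetric] v_def by simp
qed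

lemma neg_both: "(x::real) * y > 0 \<Longrightarrow> x + y < 0 \<Longrightarrow> x < 0 \<and> y < 0"
  using zero_less_mult_iff[of x y] by linarith

lemma contF: "continuous_on S F"
  unfolding F_def by (intro continuous_intros)

lemma part3:
  fixes \<alpha> \<beta> :: real
  assumes roots: "{x. F x = 0} = {\<alpha>, \<beta>}" and "0 < \<alpha>" and ab: "\<alpha> < \<beta>" and "\<beta> < 1"
    and p: "0 < p" "p < \<alpha>" and sig: "\<sigma> = 1 \<or> \<sigma> = -1"
  shows "let s = sqrt (F p);
            v = (p\<^sup>2 - 4 * p + 2 + \<sigma> * s, \<sigma> * 2 * s, p\<^sup>2 + 2 * p - 2 - \<sigma> * s)
        in (v \<in> U p \<or> - v \<in> U p) \<and> critical p v"
proof -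
  have rootge: "\<alpha> \<le> x" if "F x = 0" for x
  proof -
    have "x \<in> {\<alpha>, \<beta>}" using roots that by blast
    then show ?thesis using ab by auto
  qed
  have F0: "F 0 = 4" unfolding F_def by simp
  have a25: "\<alpha> \<le> 2/5"
  proof -
    have "F (2/5) \<le> 0" unfolding F_def by (simp add: eval_nat_numeral)
    then obtain x where "0 \<le> x" "x \<le> 2/5" "F x = 0"
      using IVT2'[of F "2/5" 0 0] F0 contF by auto
    then show ?thesis using rootge by fastforce
  qed
  have Fp: "F p > 0"
  proof (rule ccontr)
    assume "\<not> F p > 0"
    then obtain x where "0 \<le> x" "x \<le> p" "F x = 0"
      using IVT2'[of F p 0 0] F0 contF p by auto
    then show False using rootge p by fastforce
  qed
  have p1: "p < 2/5" using p a25 by simp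
  have pp: "0 < p" "p < 1" using p1 p by auto
  define s where "s = sqrt (F p)"
  define t where "t = \<sigma> * s"
  have t2: "t^2 = F p" using sig Fp unfolding t_def s_def by (auto simp: power2_eq_square)
  define v where "v = (p\<^sup>2 - 4 * p + 2 + t, 2 * t, p\<^sup>2 + 2 * p - 2 - t)"
  have vv: "v1 p v = p^2+2*p-2-t" "v2 p v = p^3-3*p^2+4*p-2+t*(p-1)"
     "v3 p v = p^3-3*p^2+4*p-2+t*(1-p)" "v4 p v = p^2+2*p-2+t"
    unfolding v_def v1_def v2_def v3_def v4_def by (simp_all add: power2_eq_square power3_eq_cube algebra_simps)
  have prod14: "v1 p v * v4 p v = 8*p*(1-p)^2"
  proof -
    have "v1 p v * v4 p v = (p^2+2*p-2)^2 - t^2" unfolding vv by algebra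
    also have "\<dots> = 8*p*(1-p)^2" unfolding t2 F_def by algebra
    finally show ?thesis .
  qed
  have sum14: "v1 p v + v4 p v < 0"
  proof -
    have "p*p < p*1" using pp by (intro mult_strict_left_mono) auto
    then have "p^2 + 2*p < 2" using p1 by (simp add: power2_eq_square)
    then show ?thesis unfolding vv by simp
  qed
  have prod23: "v2 p v * v3 p v = 8*p*(1-p)^3"
  proof -
    have "v2 p v * v3 p v = (p^3-3*p^2+4*p-2)^2 - t^2*(1-p)^2" unfolding vv by algebra
    also have "\<dots> = 8*p*(1-p)^3" unfolding t2 F_def by algebra
    finally show ?thesis .
  qed
  have sum23: "v2 p v + v3 p v < 0"
  proof -
    have "v2 p v + v3 p v = 2*((p-1)*((p-1)^2+1))" unfolding vv by (simp add: power2_eq_square power3_eq_cube algebra_simps)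
    moreover have "(p-1)^2+1 > 0" using zero_le_power2[of "p-1"] by linarith
    then have "(p-1)*((p-1)^2+1) < 0" using pp by (intro mult_neg_pos) auto
    ultimately show ?thesis by simp
  qed
  have q0: "8*p*(1-p)^2 > 0" "8*p*(1-p)^3 > 0" using pp by auto
  have sg: "v1 p v < 0" "v2 p v < 0" "v3 p v < 0" "v4 p v < 0"
    using neg_both[of "v1 p v" "v4 p v"] neg_both[of "v2 p v" "v3 p v"] prod14 prod23 sum14 sum23 q0 by auto
  have "critical p v"
    by (rule crit_KEY[OF pp]) (use sg in simp, unfold vv, rule key3[OF t2])
  moreover have "- v \<in> U p" using negU[OF pp sg] .
  moreover have "(p\<^sup>2 - 4 * p + 2 + \<sigma> * s, \<sigma> * 2 * s, p\<^sup>2 + 2 * p - 2 - \<sigma> * s) = v"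
    unfolding v_def t_def by simp
  ultimately show ?thesis unfolding Let_def s_def[symmetric] by simp
qed

theorem mainTheorem5:
  fixes \<alpha> \<beta> :: real
  assumes roots: "{x. F x = 0} = {\<alpha>, \<beta>}" and "0 < \<alpha>" and "\<alpha> < \<beta>" and "\<beta> < 1"
  shows
  "(\<forall>p. 0 < p \<and> p < 1 \<longrightarrow>
      (let v = (1, 0, p * (1 - sqrt (1 - p)) / (2 * sqrt (1 - p) + p - 2))
       in (v \<in> U p \<or> - v \<in> U p) \<and> critical p v))
   \<and> (\<forall>p. 8/9 < p \<and> p < 1 \<longrightarrow>
      (\<forall>\<sigma> \<in> {1, -1::real}.
        let r = sqrt (9 * p\<^sup>2 - 8 * p);
            v = (-1, 0, p * (3 * p + \<sigma> * r) / (2 * (p + \<sigma> * r)))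
        in (v \<in> U p \<or> - v \<in> U p) \<and> critical p v))
   \<and> (\<forall>p. 0 < p \<and> p < \<alpha> \<longrightarrow>
      (\<forall>\<sigma> \<in> {1, -1::real}.
        let s = sqrt (F p);
            v = (p\<^sup>2 - 4 * p + 2 + \<sigma> * s, \<sigma> * 2 * s, p\<^sup>2 + 2 * p - 2 - \<sigma> * s)
        in (v \<in> U p \<or> - v \<in> U p) \<and> critical p v))"
  using part1 part2 part3[OF assms] by blast


end
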